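(* Let $n\ge 2$, identify $\mathbb{C}^n\cong\mathbb{R}^{2n}$ with its standard complex structure and coordinates $z_1,\dots,z_n$, and let $w=\mathrm{Re}(dz_1\wedge\cdots\wedge dz_n)$. Let $P\subset\mathbb{C}^n$ be a complex linear subspace of real codimension two. Let $k\in\mathbb{N}\setminus\{0\}$ and $\alpha$ satisfy $k\alpha=2\pi$ and $0<\alpha\le\pi$. For $\beta\in\mathbb{R}$, let $R_{(\beta,P)}$ denote the rotation of $\mathbb{R}^{2n}$ about $P$ by angle $\beta$, i.e. the orthogonal map fixing $P$ pointwise and rotating the real $2$-plane $P^\perp$ by the angle $\beta$. For $i=0,1,\dots,k-1$ let $w_i=R_{(i\alpha,P)}(w)$ be the image of the form $w$ under this rotation. Then each $w_i$ is a special Lagrangian calibration, and $$\sum_{i=0}^{k-1} w_i=0.$$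
   Context: A special Lagrangian (SL) calibration on $\mathbb{C}^n$ is an $n$-form of the form $\mathrm{Re}\big(e^{i\theta}\,d\zeta_1\wedge\cdots\wedge d\zeta_n\big)$, $\theta\in\mathbb{R}$, where $\zeta_1,\dots,\zeta_n$ are complex linear coordinates obtained from $z_1,\dots,z_n$ by a unitary change of coordinates (equivalently, the transform of $\mathrm{Re}(dz_1\wedge\cdots\wedge dz_n)$ by a complex-linear isometry). *)

theory Defs
  imports "HOL-Analysis.Analysis"
begin

text \<open>We model C^n as complex^'n (n = CARD('n)), with its real Euclidean structure
 (real inner product x \<bullet> y = Re(sum conj(x_j) y_j)). A real n-form on C^n is modelled as a
 real-valued function of n-tuples of vectors (tuples indexed by 'n).\<close>

type_synonym 'n nform = "('n \<Rightarrow> complex^'n) \<Rightarrow> real"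

definition complex_subspace :: "(complex^'n) set \<Rightarrow> bool" where
  "complex_subspace P \<longleftrightarrow> subspace P \<and> (\<forall>c::complex. \<forall>x\<in>P. c *s x \<in> P)"

text \<open>The standard form w = Re(dz_1 ^ ... ^ dz_n): (v_1..v_n) maps to Re det[(v_j)_i].\<close>
definition std_form :: "'n::finite nform" where
  "std_form V = Re (det (\<chi> i j. V j $ i))"

definition adjoint_mat :: "complex^'n^'n \<Rightarrow> complex^'n^'n" where
  "adjoint_mat U = (\<chi> i j. cnj (U $ j $ i))"

definition unitary_mat :: "complex^'n::finite^'n \<Rightarrow> bool" where
  "unitary_mat U \<longleftrightarrow> adjoint_mat U ** U = mat 1"

definition SL_calibration :: "'n::finite nform \<Rightarrow> bool" where
  "SL_calibration \<phi> \<longleftrightarrow> (\<exists>(\<theta>::real) (U::complex^'n^'n). unitary_mat U \<and>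
     \<phi> = (\<lambda>V. Re (exp (\<i> * of_real \<theta>) * det (\<chi> i j. (U *v V j) $ i))))"

text \<open>Rotation by angle \<beta> in the real oriented plane with orthonormal basis (e1,e2),
 fixing its orthogonal complement pointwise.\<close>
definition plane_rotation :: "complex^'n \<Rightarrow> complex^'n \<Rightarrow> real \<Rightarrow> complex^'n \<Rightarrow> complex^'n" where
  "plane_rotation e1 e2 \<beta> x =
     x - (x \<bullet> e1) *\<^sub>R e1 - (x \<bullet> e2) *\<^sub>R e2
       + ((x \<bullet> e1) * cos \<beta> - (x \<bullet> e2) * sin \<beta>) *\<^sub>R e1
       + ((x \<bullet> e1) * sin \<beta> + (x \<bullet> e2) * cos \<beta>) *\<^sub>R e2"

definition form_image :: "(complex^'n \<Rightarrow> complex^'n) \<Rightarrow> 'n nform \<Rightarrow> 'n nform" where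
  "form_image R w = (\<lambda>V. w (\<lambda>j. inv R (V j)))"

end

theory Submission
  imports Defs
begin

definition hp :: "complex^'n::finite \<Rightarrow> complex^'n \<Rightarrow> complex" where
  "hp x y = (\<Sum>j\<in>UNIV. cnj (x$j) * y$j)"

lemma inner_hp: "x \<bullet> y = Re (hp x y)"
  by (simp add: hp_def inner_vec_def inner_complex_def Re_sum)

lemma hp_cnj: "hp y x = cnj (hp x y)"
  by (simp add: hp_def cnj_sum mult.commute)

lemma hp_add_right: "hp x (y + z) = hp x y + hp x z"
  by (simp add: hp_def sum.distrib distrib_left)

lemma hp_diff_right: "hp x (y - z) = hp x y - hp x z"
  by (simp add: hp_def sum_subtractf right_diff_distrib)

lemma hp_scale_right: "hp x (c *s y) = c * hp x y"
  by (simp add: hp_def sum_distrib_left algebra_simps)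

lemma hp_scale_left: "hp (c *s x) y = cnj c * hp x y"
  by (simp add: hp_def sum_distrib_left algebra_simps)

lemma hp_self: "hp x x = complex_of_real (x \<bullet> x)"
proof -
  have "Im (hp x x) = 0"
    by (simp add: hp_def Im_sum algebra_simps)
  then show ?thesis by (simp add: inner_hp complex_eq_iff)
qed

lemma scaleR_as_smult: "(r::real) *\<^sub>R (x::complex^'n) = complex_of_real r *s x"
  by (rule iffD2[OF vec_eq_iff], rule allI, simp only: vector_scaleR_component vector_smult_component) (simp add: scaleR_conv_of_real)

lemma hp_zero_imp_inner: "hp x y = 0 \<Longrightarrow> x \<bullet> y = 0"
  by (simp add: inner_hp)

lemma hp_norm1: "norm (e::complex^'n::finite) = 1 \<Longrightarrow> hp e e = 1"
  by (simp add: hp_self flip: power2_norm_eq_inner)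

lemma e2_form:
  fixes P :: "(complex^'n::finite) set" and e1 e2 :: "complex^'n"
  assumes cs: "complex_subspace P"
    and dP: "dim P = 2 * CARD('n) - 2"
    and n1: "norm e1 = 1" and n2: "norm e2 = 1" and o12: "e1 \<bullet> e2 = 0"
    and oP: "\<forall>x\<in>P. x \<bullet> e1 = 0 \<and> x \<bullet> e2 = 0"
  shows "\<exists>b::real. b^2 = 1 \<and> e2 = (\<i> * complex_of_real b) *s e1"
proof -
  have ee: "hp e1 e1 = 1" using n1 by (rule hp_norm1)
  have sP: "subspace P" and cP: "\<And>c x. x \<in> P \<Longrightarrow> c *s x \<in> P"
    using cs by (auto simp: complex_subspace_def)
  have hpP: "hp x e1 = 0" if "x \<in> P" for x
  proof -
    have "Re (hp x e1) = 0" using oP that by (simp add: inner_hp)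
    moreover have "(\<i> *s x) \<bullet> e1 = 0" using oP cP[OF that] by blast
    then have "Im (hp x e1) = 0" by (simp add: inner_hp hp_scale_left)
    ultimately show ?thesis by (simp add: complex_eq_iff)
  qed
  define Q where "Q = {y \<in> UNIV. \<forall>x \<in> P. orthogonal x y}"
  have "dim Q + dim P = dim (UNIV :: (complex^'n) set)"
    unfolding Q_def by (rule dim_subspace_orthogonal_to_vectors) (use sP in auto)
  moreover have "CARD('n) > 0" by simp
  ultimately have dQ: "dim Q = 2" using dP by (simp del: zero_less_card_finite)
  define c where "c = hp e1 e2"
  define f where "f = e2 - c *s e1"
  have hf: "hp e1 f = 0" by (simp add: f_def hp_diff_right hp_scale_right ee c_def)
  have f0: "f = 0"
  proof (rule ccontr)
    assume fn: "f \<noteq> 0"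
    define S where "S = {e1, \<i> *s e1, f}"
    have e10: "e1 \<noteq> 0" using n1 by auto
    have ie10: "\<i> *s e1 \<noteq> 0" using ee by (auto simp: hp_scale_left hp_scale_right hp_def)
    have o1: "e1 \<bullet> (\<i> *s e1) = 0" by (simp add: inner_hp hp_scale_right ee)
    have o2: "e1 \<bullet> f = 0" by (simp add: inner_hp hf)
    have o3: "(\<i> *s e1) \<bullet> f = 0" by (simp add: inner_hp hp_scale_left hf)
    have pw: "pairwise orthogonal S"
      unfolding S_def pairwise_insert using o1 o2 o3
      by (auto simp: orthogonal_def inner_commute)
    have z: "0 \<notin> S" using e10 ie10 fn by (auto simp: S_def)
    have ind: "independent S" by (rule pairwise_orthogonal_independent[OF pw z])
    have d1: "e1 \<noteq> \<i> *s e1" using o1 e10 by (metis inner_eq_zero_iff)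
    have d2: "e1 \<noteq> f" using o2 e10 by (metis inner_eq_zero_iff)
    have d3: "\<i> *s e1 \<noteq> f" using o3 ie10 by (metis inner_eq_zero_iff)
    have cS: "card S = 3" using d1 d2 d3 by (simp add: S_def)
    have SQ: "S \<subseteq> Q"
    proof -
      have "x \<bullet> (\<i> *s e1) = 0" if "x \<in> P" for x
        using hpP[OF that] by (simp add: inner_hp hp_scale_right)
      moreover have "x \<bullet> f = 0" if "x \<in> P" for x
        using hpP[OF that] oP that
        by (simp add: inner_hp f_def hp_diff_right hp_scale_right)
      ultimately show ?thesis using oP by (auto simp: S_def Q_def orthogonal_def)
    qed
    have "card S \<le> dim Q" by (rule independent_card_le_dim[OF SQ ind])
    then show False using cS dQ by simp
  qed
  then have e2c: "e2 = c *s e1" by (simp add: f_def)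
  have rc: "Re c = 0" using o12 by (simp add: c_def inner_hp)
  have "hp e2 e2 = 1" using n2 by (rule hp_norm1)
  then have "cnj c * c = 1" by (simp add: e2c hp_scale_left hp_scale_right ee mult.commute)
  then have "(Im c)^2 = 1" using rc by (simp add: complex_eq_iff power2_eq_square)
  moreover have "c = \<i> * complex_of_real (Im c)" using rc by (simp add: complex_eq_iff)
  ultimately show ?thesis using e2c by metis
qed

lemma rot_form:
  fixes e1 e2 x :: "complex^'n::finite"
  assumes b: "b^2 = 1" and e2: "e2 = (\<i> * complex_of_real b) *s e1"
  shows "plane_rotation e1 e2 \<beta> x = x + ((cis (b * \<beta>) - 1) * hp e1 x) *s e1"
proof -
  define H where "H = hp e1 x"
  have A: "x \<bullet> e1 = Re H" by (simp add: H_def inner_hp hp_cnj[of x])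
  have B: "x \<bullet> e2 = b * Im H"
    by (simp add: H_def e2 inner_hp hp_scale_right hp_cnj[of x])
  have bb: "b = 1 \<or> b = -1" using b by (simp add: power2_eq_1_iff)
  show ?thesis
    unfolding plane_rotation_def A B vec_eq_iff
    apply (rule allI)
    apply (simp only: vector_scaleR_component vector_smult_component vector_add_component
           vector_minus_component e2)
    using bb by (auto simp: complex_eq_iff cis.sel algebra_simps H_def)
qed

lemma rot_comp:
  fixes e1 e2 x :: "complex^'n::finite"
  assumes b: "b^2 = 1" and e2: "e2 = (\<i> * complex_of_real b) *s e1" and ee: "hp e1 e1 = 1"
  shows "plane_rotation e1 e2 \<gamma> (plane_rotation e1 e2 (-\<gamma>) x) = x"
proof -
  define H where "H = hp e1 x"
  define z where "z = plane_rotation e1 e2 (-\<gamma>) x"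
  have z: "z = x + ((cis (- (b * \<gamma>)) - 1) * H) *s e1"
    by (simp add: z_def H_def rot_form[OF b e2])
  have hz: "hp e1 z = cis (- (b * \<gamma>)) * H"
    by (simp only: z hp_add_right hp_scale_right ee H_def) (simp add: algebra_simps)
  have cc: "cis (b * \<gamma>) * cis (- (b * \<gamma>)) = 1" by (simp add: cis_mult)
  have "plane_rotation e1 e2 \<gamma> z = z + ((cis (b * \<gamma>) - 1) * hp e1 z) *s e1"
    by (rule rot_form[OF b e2])
  also have "\<dots> = x + ((cis (- (b * \<gamma>)) - 1) * H + (cis (b * \<gamma>) - 1) * (cis (- (b * \<gamma>)) * H)) *s e1"
    by (simp only: hz) (simp add: z vector_sadd_rdistrib add.assoc)
  also have "(cis (- (b * \<gamma>)) - 1) * H + (cis (b * \<gamma>) - 1) * (cis (- (b * \<gamma>)) * H) = 0"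
    using cc by (simp add: algebra_simps)
  finally show ?thesis by (simp add: z_def)
qed

lemma inv_rot:
  fixes e1 e2 y :: "complex^'n::finite"
  assumes b: "b^2 = 1" and e2: "e2 = (\<i> * complex_of_real b) *s e1" and ee: "hp e1 e1 = 1"
  shows "inv (plane_rotation e1 e2 \<beta>) y = plane_rotation e1 e2 (-\<beta>) y"
proof (rule inv_f_eq)
  show "inj (plane_rotation e1 e2 \<beta>)"
    by (rule inj_on_inverseI[where g = "plane_rotation e1 e2 (-\<beta>)"])
       (use rot_comp[OF b e2 ee, of "-\<beta>"] in simp)
  show "plane_rotation e1 e2 \<beta> (plane_rotation e1 e2 (- \<beta>) y) = y"
    by (rule rot_comp[OF b e2 ee])
qed

lemma det_row_repl:
  fixes z :: "'a::field^'n::finite"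
  shows "det (\<chi> i. if i = k then z else (mat 1 :: 'a^'n^'n) $ i) = z $ k"
proof -
  define A where "A = (\<chi> i. if i = k then z else (mat 1 :: 'a^'n^'n) $ i)"
  have rowA: "row j A = (if j = k then z else axis j 1)" for j
    by (simp add: A_def row_def axis_def mat_def vec_eq_iff)
  define x where "x = - (\<Sum>j\<in>UNIV-{k}. z$j *s axis j (1::'a))"
  have xs: "x \<in> vec.span {row j A | j. j \<noteq> k}"
    unfolding x_def
    apply (rule vec.span_neg)
    apply (rule vec.span_sum)
    apply (rule vec.span_scale)
    apply (rule vec.span_base)
    using rowA by auto
  have "z = (\<Sum>j\<in>UNIV. z$j *s axis j (1::'a))" by (simp add: basis_expansion)
  also have "\<dots> = z$k *s axis k 1 + (\<Sum>j\<in>UNIV-{k}. z$j *s axis j (1::'a))"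
    by (simp add: sum.remove)
  finally have zz: "z = z$k *s axis k 1 + (\<Sum>j\<in>UNIV-{k}. z$j *s axis j (1::'a))" .
  have rk: "row k A + x = z$k *s axis k 1"
    apply (simp add: rowA x_def)
    using zz by (metis add_diff_cancel_right')
  have "det A = det (\<chi> i. if i = k then row k A + x else row i A)"
    by (rule det_row_span[OF xs, symmetric])
  also have "(\<chi> i. if i = k then row k A + x else row i A) = (\<chi> i. if i = k then z$k *s axis k 1 else (mat 1 :: 'a^'n^'n) $ i)"
    using rk by (simp add: A_def row_def vec_eq_iff)
  also have "det \<dots> = z$k * det (\<chi> i. if i = k then axis k 1 else (mat 1 :: 'a^'n^'n) $ i)"
    by (rule det_row_mul)
  also have "(\<chi> i. if i = k then axis k 1 else (mat 1 :: 'a^'n^'n) $ i) = mat 1"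
    by (simp add: vec_eq_iff mat_def axis_def)
  finally show ?thesis by (simp add: A_def)
qed

lemma det_claim2:
  fixes x z :: "'a::field^'n::finite"
  assumes "finite S" "k \<notin> S"
  shows "det (\<chi> i. if i = k then z else if i \<in> S then (mat 1 :: 'a^'n^'n) $ i + x$i *s z else mat 1 $ i) = z $ k"
  using assms
proof (induction S rule: finite_induct)
  case empty
  then show ?case by (simp only: empty_iff if_False) (rule det_row_repl)
next
  case (insert j S)
  define A where "A = (\<chi> i. if i = k then z else if i \<in> insert j S then (mat 1 :: 'a^'n^'n) $ i + x$i *s z else mat 1 $ i)"
  have jk: "j \<noteq> k" using insert by auto
  have "det (\<chi> m. if m = j then row j A + (- x$j) *s row k A else row m A) = det A"
    by (rule det_row_operation[OF jk])
  moreover have "(\<chi> m. if m = j then row j A + (- x$j) *s row k A else row m A) =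
     (\<chi> i. if i = k then z else if i \<in> S then (mat 1 :: 'a^'n^'n) $ i + x$i *s z else mat 1 $ i)"
    using jk insert(2) by (auto simp: vec_eq_iff row_def A_def algebra_simps)
  ultimately show ?case using insert by (simp add: A_def)
qed

lemma det_claim1:
  fixes x z :: "'a::field^'n::finite"
  assumes "finite S"
  shows "det (\<chi> i. if i \<in> S then (mat 1 :: 'a^'n^'n) $ i + x$i *s z else mat 1 $ i) = 1 + (\<Sum>i\<in>S. x$i * z$i)"
  using assms
proof (induction S rule: finite_induct)
  case empty
  then show ?case by simp
next
  case (insert k S)
  define c where "c = (\<lambda>i. if i \<in> S then (mat 1 :: 'a^'n^'n) $ i + x$i *s z else mat 1 $ i)"
  have "(\<chi> i. if i \<in> insert k S then (mat 1 :: 'a^'n^'n) $ i + x$i *s z else mat 1 $ i)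
     = (\<chi> i. if i = k then (mat 1 :: 'a^'n^'n) $ i + x$k *s z else c i)"
    by (auto simp: vec_eq_iff c_def)
  also have "det \<dots> = det (\<chi> i. if i = k then (mat 1 :: 'a^'n^'n) $ i else c i)
      + det (\<chi> i. if i = k then x$k *s z else c i)"
    by (rule det_row_add)
  also have "(\<chi> i. if i = k then (mat 1 :: 'a^'n^'n) $ i else c i) =
     (\<chi> i. if i \<in> S then (mat 1 :: 'a^'n^'n) $ i + x$i *s z else mat 1 $ i)"
    using insert(2) by (auto simp: vec_eq_iff c_def)
  also have "det (\<chi> i. if i = k then x$k *s z else c i) = x$k * det (\<chi> i. if i = k then z else c i)"
    by (rule det_row_mul)
  also have "det (\<chi> i. if i = k then z else c i) = z$k"
    unfolding c_def by (rule det_claim2[OF insert(1,2)])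
  finally show ?case using insert by (simp add: add.commute add.left_commute)
qed

lemma det_rank1:
  fixes x y :: "'a::field^'n::finite"
  shows "det (\<chi> i j. (if i = j then 1 else 0) + x$i * y$j) = 1 + (\<Sum>i\<in>UNIV. x$i * y$i)"
proof -
  have "(\<chi> i j. (if i = j then 1 else 0) + x$i * y$j) =
     (\<chi> i. if i \<in> UNIV then (mat 1 :: 'a^'n^'n) $ i + x$i *s y else mat 1 $ i)"
    by (simp add: vec_eq_iff mat_def)
  then show ?thesis using det_claim1[of UNIV x y] by simp
qed

lemma form_val:
  fixes e1 e2 :: "complex^'n::finite"
  assumes b: "b^2 = 1" and e2: "e2 = (\<i> * complex_of_real b) *s e1" and ee: "hp e1 e1 = 1"
  shows "form_image (plane_rotation e1 e2 \<beta>) std_form V = Re (cis (-(b*\<beta>)) * det (\<chi> i j. V j $ i))"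
proof -
  define \<mu> where "\<mu> = cis (-(b*\<beta>)) - 1"
  define Ub :: "complex^'n^'n" where "Ub = (\<chi> i k. (if i = k then 1 else 0) + (\<mu> * e1$i) * cnj (e1$k))"
  have comp: "plane_rotation e1 e2 (-\<beta>) y $ i = (\<Sum>k\<in>UNIV. Ub$i$k * y$k)" for y i
  proof -
    have "plane_rotation e1 e2 (-\<beta>) y $ i = y$i + \<mu> * hp e1 y * e1$i"
      by (simp add: rot_form[OF b e2] \<mu>_def)
    also have "\<dots> = (\<Sum>k\<in>UNIV. (if i = k then y$k else 0)) + (\<Sum>k\<in>UNIV. \<mu> * e1$i * (cnj (e1$k) * y$k))"
      by (simp add: hp_def sum_distrib_left mult_ac)
    also have "\<dots> = (\<Sum>k\<in>UNIV. Ub$i$k * y$k)"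
      unfolding Ub_def vec_lambda_beta distrib_right sum.distrib
      by (rule arg_cong2[where f="(+)"]; rule sum.cong) (auto simp: mult_ac)
    finally show ?thesis .
  qed
  have mat: "(\<chi> i j. inv (plane_rotation e1 e2 \<beta>) (V j) $ i) = Ub ** (\<chi> i j. V j $ i)"
    by (simp add: vec_eq_iff matrix_matrix_mult_def inv_rot[OF b e2 ee] comp)
  have dU: "det Ub = cis (-(b*\<beta>))"
  proof -
    have "det Ub = 1 + (\<Sum>i\<in>UNIV. (\<mu> * e1$i) * cnj (e1$i))"
      unfolding Ub_def using det_rank1[of "\<chi> i. \<mu> * e1$i" "\<chi> i. cnj (e1$i)"] by simp
    also have "\<dots> = 1 + \<mu> * hp e1 e1"
      by (simp add: hp_def sum_distrib_left algebra_simps)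
    finally show ?thesis by (simp add: ee \<mu>_def)
  qed
  show ?thesis
    unfolding form_image_def std_form_def mat det_mul dU ..
qed

lemma adj_id: "adjoint_mat (mat 1 :: complex^'n::finite^'n) = mat 1"
  by (simp add: vec_eq_iff adjoint_mat_def mat_def)

theorem lemma4:
  fixes P :: "(complex^'n::finite) set" and e1 e2 :: "complex^'n"
    and k :: nat and \<alpha> :: real
  assumes "CARD('n) \<ge> 2"
    and "complex_subspace P"
    and "dim P = 2 * CARD('n) - 2"
    and "norm e1 = 1" and "norm e2 = 1" and "e1 \<bullet> e2 = 0"
    and "\<forall>x\<in>P. x \<bullet> e1 = 0 \<and> x \<bullet> e2 = 0"
    and "k > 0" and "real k * \<alpha> = 2 * pi" and "0 < \<alpha>" and "\<alpha> \<le> pi"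
  shows "(\<forall>i<k. SL_calibration (form_image (plane_rotation e1 e2 (real i * \<alpha>)) std_form))
       \<and> (\<forall>V. (\<Sum>i<k. form_image (plane_rotation e1 e2 (real i * \<alpha>)) std_form V) = 0)"
proof -
  obtain b where b: "b^2 = 1" and e2: "e2 = (\<i> * complex_of_real b) *s e1"
    using e2_form[OF assms(2,3,4,5,6,7)] by blast
  have ee: "hp e1 e1 = 1" using assms(4) by (rule hp_norm1)
  have bb: "b = 1 \<or> b = -1" using b by (simp add: power2_eq_1_iff)
  note fv = form_val[OF b e2 ee]
  have SL: "SL_calibration (form_image (plane_rotation e1 e2 \<beta>) std_form)" for \<beta>
    unfolding SL_calibration_def
  proof (intro exI conjI)
    show "unitary_mat (mat 1 :: complex^'n^'n)"
      by (simp add: unitary_mat_def adj_id)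
    show "form_image (plane_rotation e1 e2 \<beta>) std_form =
      (\<lambda>V. Re (exp (\<i> * complex_of_real (-(b*\<beta>))) * det (\<chi> i j. (mat 1 *v V j) $ i)))"
      by (rule ext) (simp add: fv cis_conv_exp)
  qed
  define \<omega> where "\<omega> = cis (-(b*\<alpha>))"
  have wpow: "cis (-(b * (real i * \<alpha>))) = \<omega> ^ i" for i
    unfolding \<omega>_def Complex.DeMoivre by (simp add: algebra_simps)
  have wk: "\<omega> ^ k = 1"
  proof -
    have "\<omega> ^ k = cis (-(b * (real k * \<alpha>)))" by (simp add: wpow)
    also have "\<dots> = 1" using bb assms(9) by (auto simp: complex_eq_iff)
    finally show ?thesis .
  qed
  have w1: "\<omega> \<noteq> 1"
  proof
    assume "\<omega> = 1"
    then have "cos (b * \<alpha>) = 1" by (simp add: \<omega>_def complex_eq_iff)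
    then have "cos \<alpha> = cos 0" using bb by auto
    then have "\<alpha> = 0" using cos_inj_pi[of \<alpha> 0] assms(10,11) by simp
    then show False using assms(10) by simp
  qed
  have sumw: "(\<Sum>i<k. \<omega> ^ i) = 0"
    using w1 wk by (simp add: sum_gp_strict)
  have "(\<Sum>i<k. form_image (plane_rotation e1 e2 (real i * \<alpha>)) std_form V) = 0" for V
  proof -
    have "(\<Sum>i<k. form_image (plane_rotation e1 e2 (real i * \<alpha>)) std_form V)
        = Re ((\<Sum>i<k. \<omega> ^ i) * det (\<chi> i j. V j $ i))"
      by (simp add: fv wpow Re_sum sum_distrib_right)
    then show ?thesis by (simp add: sumw)
  qed
  then show ?thesis using SL by blast
qed

end
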